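(* Let $Q\ge2$ be an integer, let $i$ be any integer, and let $k\ge3$. Then \[ \begin{pmatrix}\nu_{k-1}(\gamma_i)&\nu_k(\gamma_i)\\ \nu_{k-2}(\gamma_{i+1})&\nu_{k-1}(\gamma_{i+1})\end{pmatrix}\in SL_2(\mathbb{Z}), \] i.e. $\nu_{k-1}(\gamma_i)\nu_{k-1}(\gamma_{i+1})-\nu_k(\gamma_i)\nu_{k-2}(\gamma_{i+1})=1$.
   Context: For $Q\in\mathbb{N}$, the Farey fractions of order $Q$ are $\mathcal{F}_Q=\{a/q\in\mathbb{Q}: 1\le q\le Q,\ 0<a\le q,\ \gcd(a,q)=1\}$. Write $\mathcal{F}_Q=\{\gamma_1,\ldots,\gamma_{N(Q)}\}$ with $1/Q=\gamma_1<\cdots<\gamma_{N(Q)}=1$, and extend to all $i\in\mathbb{Z}$ by $\gamma_{i+N(Q)}=\gamma_i+1$. Write $\gamma_i=p_i/q_i$ in lowest terms with $q_i>0$. For a positive integer $k$, $\nu_k(\gamma_i)=p_{i+k-1}q_{i-1}-p_{i-1}q_{i+k-1}$ (so $\nu_1\equiv1$). *)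

theory Defs
  imports Complex_Main
begin

definition farey :: "nat \<Rightarrow> rat set" where
  "farey Q = {r. \<exists>a q::int. 1 \<le> q \<and> q \<le> int Q \<and> 0 < a \<and> a \<le> q \<and> coprime a q
                 \<and> r = of_int a / of_int q}"

definition farey_N :: "nat \<Rightarrow> nat" where
  "farey_N Q = card (farey Q)"

text \<open>gamma Q i for i in 1..N is the i-th smallest Farey fraction (gamma Q 1 = 1/Q,
  gamma Q N = 1); extended to all integers by gamma (i + N) = gamma i + 1.\<close>
definition farey_gamma :: "nat \<Rightarrow> int \<Rightarrow> rat" where
  "farey_gamma Q i =
     sorted_list_of_set (farey Q) ! nat ((i - 1) mod int (farey_N Q))
     + of_int ((i - 1) div int (farey_N Q))"

definition farey_p :: "nat \<Rightarrow> int \<Rightarrow> int" where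
  "farey_p Q i = fst (quotient_of (farey_gamma Q i))"

definition farey_q :: "nat \<Rightarrow> int \<Rightarrow> int" where
  "farey_q Q i = snd (quotient_of (farey_gamma Q i))"

definition farey_nu :: "nat \<Rightarrow> nat \<Rightarrow> int \<Rightarrow> int" where
  "farey_nu Q k i = farey_p Q (i + int k - 1) * farey_q Q (i - 1)
                    - farey_p Q (i - 1) * farey_q Q (i + int k - 1)"

end

theory Submission imports Defs begin

lemma qo_mk: assumes "b > 0" "coprime a b"
  shows "quotient_of (of_int a / of_int b) = (a, b)"
  using assms by (simp add: Fract_of_int_quotient[symmetric] quotient_of_Fract)

lemma qo_add_int: "quotient_of (r + of_int c) =
   (fst (quotient_of r) + c * snd (quotient_of r), snd (quotient_of r))"
proof -
  obtain a b where ab: "quotient_of r = (a, b)" by (cases "quotient_of r")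
  have b: "b > 0" using quotient_of_denom_pos[OF ab] .
  have cp: "coprime a b" using quotient_of_coprime[OF ab] .
  have r: "r = of_int a / of_int b" using quotient_of_div[OF ab] .
  have "r + of_int c = of_int (a + c * b) / of_int b" using b by (simp add: r field_simps)
  moreover have "coprime (a + c * b) b"
  proof (rule coprimeI)
    fix d assume "d dvd a + c * b" "d dvd b"
    moreover have "d dvd c * b" using \<open>d dvd b\<close> by simp
    ultimately have "d dvd a" using dvd_add_left_iff by blast
    then show "is_unit d" using cp \<open>d dvd b\<close> by (meson coprime_common_divisor)
  qed
  ultimately show ?thesis using qo_mk[OF b, of "a + c * b"] ab by simp
qed

lemma farey_mem: "r \<in> farey Q \<longleftrightarrow> 0 < r \<and> r \<le> 1 \<and> snd (quotient_of r) \<le> int Q"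
proof
  assume "r \<in> farey Q"
  then obtain a q :: int where h: "1 \<le> q" "q \<le> int Q" "0 < a" "a \<le> q" "coprime a q" "r = of_int a / of_int q"
    unfolding farey_def by blast
  then have "quotient_of r = (a, q)" using qo_mk by simp
  then show "0 < r \<and> r \<le> 1 \<and> snd (quotient_of r) \<le> int Q" using h by (simp add: divide_le_eq_1)
next
  assume h: "0 < r \<and> r \<le> 1 \<and> snd (quotient_of r) \<le> int Q"
  obtain a b where ab: "quotient_of r = (a, b)" by (cases "quotient_of r")
  have b: "b > 0" using quotient_of_denom_pos[OF ab] .
  have cp: "coprime a b" using quotient_of_coprime[OF ab] .
  have r: "r = of_int a / of_int b" using quotient_of_div[OF ab] .
  have "0 < a" using h b r by (simp add: zero_less_divide_iff)
  moreover have "a \<le> b" using h b r by (simp add: divide_le_eq_1)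
  ultimately show "r \<in> farey Q" unfolding farey_def using b cp r h ab
    by (intro CollectI exI[of _ a] exI[of _ b]) auto
qed

lemma farey_finite: "finite (farey Q)"
proof -
  have "farey Q \<subseteq> (\<lambda>(a,q). of_int a / of_int q) ` ({0..int Q} \<times> {0..int Q})"
    unfolding farey_def by (auto simp: image_iff)
  then show ?thesis by (rule finite_subset) auto
qed

lemma farey_succ:
  assumes u: "u \<in> farey Q" "u < 1" and ab: "quotient_of u = (a, b)"
  obtains x y where "of_int x / of_int y \<in> farey Q" "u < of_int x / of_int y"
    "\<forall>w\<in>farey Q. u < w \<longrightarrow> of_int x / of_int y \<le> w"
    "quotient_of (of_int x / of_int y) = (x, y)" "x * b - a * y = 1"
proof -
  have b: "b > 0" using quotient_of_denom_pos[OF ab] .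
  have cp: "coprime a b" using quotient_of_coprime[OF ab] .
  have ur: "u = of_int a / of_int b" using quotient_of_div[OF ab] .
  have bQ: "b \<le> int Q" and u0: "0 < u" using u(1) ab by (auto simp: farey_mem)
  have a0: "a > 0" using u0 b ur by (simp add: zero_less_divide_iff)
  have ab1: "a < b" using u(2) b ur by simp
  obtain s t where st: "s * a + t * b = gcd a b" using bezout_int by blast
  then have st1: "s * a + t * b = 1" using cp by simp
  define m where "m = (int Q + s) div b"
  define y where "y = - s + m * b"
  define x where "x = t + m * a"
  have det: "x * b - a * y = 1" unfolding x_def y_def using st1 by (simp add: algebra_simps)
  have "(int Q + s) div b * b + (int Q + s) mod b = int Q + s" by (rule div_mult_mod_eq)
  then have ym: "y = int Q - (int Q + s) mod b" unfolding y_def m_def by linarith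
  have yQ: "y \<le> int Q" "int Q - b < y" using ym b pos_mod_sign pos_mod_bound[OF b, of "int Q + s"] by auto
  have y1: "y \<ge> 1" using yQ bQ by simp
  have "x * b \<ge> 2"
  proof -
    have "1 * 1 \<le> a * y" using a0 y1 by (intro mult_mono) auto
    then show ?thesis using det by simp
  qed
  then have x0: "x > 0" using b by (smt (verit) mult_nonpos_nonneg)
  have "x * b \<le> y * b"
  proof -
    have "a * y \<le> (b - 1) * y" using ab1 y1 by (intro mult_right_mono) auto
    then show ?thesis using det y1 by (simp add: algebra_simps)
  qed
  then have xy: "x \<le> y" using b by simp
  have cpxy: "coprime x y"
  proof (rule coprimeI)
    fix d assume "d dvd x" "d dvd y"
    then have "d dvd x * b - a * y" by simp
    then show "is_unit d" using det by simp
  qed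
  have qv: "quotient_of (of_int x / of_int y) = (x, y)" using qo_mk cpxy y1 by simp
  have vF: "of_int x / of_int y \<in> farey Q" using qv x0 xy yQ y1 by (simp add: farey_mem divide_le_eq_1)
  have "rat_of_int (a * y) < rat_of_int (x * b)" using det by linarith
  then have "rat_of_int a * rat_of_int y < rat_of_int x * rat_of_int b" by simp
  moreover have "rat_of_int b > 0" "rat_of_int y > 0" using b y1 by auto
  ultimately have lt: "u < of_int x / of_int y" unfolding ur by (simp add: field_simps)
  have least: "\<forall>w\<in>farey Q. u < w \<longrightarrow> of_int x / of_int y \<le> w"
  proof (intro ballI impI, rule ccontr)
    fix w assume wF: "w \<in> farey Q" and uw: "u < w" and nle: "\<not> of_int x / of_int y \<le> w"
    obtain r s' where rs: "quotient_of w = (r, s')" by (cases "quotient_of w")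
    have s0: "s' > 0" using quotient_of_denom_pos[OF rs] .
    have wr: "w = of_int r / of_int s'" using quotient_of_div[OF rs] .
    have sQ: "s' \<le> int Q" using wF rs by (simp add: farey_mem)
    have "of_int a / of_int b < (of_int r / of_int s' :: rat)" using uw ur wr by simp
    then have "rat_of_int (a * s') < rat_of_int (r * b)" using b s0 by (simp add: divide_less_eq less_divide_eq field_simps)
    then have e1: "r * b - a * s' \<ge> 1" by linarith
    have "(of_int r / of_int s' :: rat) < of_int x / of_int y" using nle wr by simp
    then have "rat_of_int (r * y) < rat_of_int (x * s')" using y1 s0 by (simp add: divide_less_eq less_divide_eq field_simps)
    then have e2: "x * s' - r * y \<ge> 1" by linarith
    have "s' = s' * (x * b - a * y)" using det by simp
    also have "\<dots> = y * (r * b - a * s') + b * (x * s' - r * y)" by (simp add: algebra_simps)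
    finally have id: "s' = y * (r * b - a * s') + b * (x * s' - r * y)" .
    have "y * (r * b - a * s') \<ge> y" using e1 y1 by simp
    moreover have "b * (x * s' - r * y) \<ge> b" using e2 b by simp
    ultimately have "s' \<ge> y + b" using id by linarith
    then show False using sQ yQ by simp
  qed
  show ?thesis using that vF lt least qv det by blast
qed


lemma list_facts:
  fixes Q :: nat
  defines "L \<equiv> sorted_list_of_set (farey Q)"
  shows "set L = farey Q" "sorted_wrt (<) L" "length L = farey_N Q"
  unfolding L_def farey_N_def using farey_finite
  by (auto simp: sorted_list_of_set.length_sorted_key_list_of_set)

lemma list_neighbor:
  fixes Q :: nat
  defines "L \<equiv> sorted_list_of_set (farey Q)"
  assumes "Suc m < length L"
  shows "fst (quotient_of (L ! Suc m)) * snd (quotient_of (L ! m))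
       - fst (quotient_of (L ! m)) * snd (quotient_of (L ! Suc m)) = 1"
proof -
  note lf = list_facts[of Q, folded L_def]
  define u where "u = L ! m"
  define v where "v = L ! Suc m"
  have uF: "u \<in> farey Q" using lf assms(2) u_def by (metis Suc_lessD nth_mem)
  have vF: "v \<in> farey Q" using lf assms(2) v_def by (metis nth_mem)
  have uv: "u < v" using sorted_wrt_nth_less[OF lf(2), of m "Suc m"] assms(2) u_def v_def by simp
  have "v \<le> 1" using vF by (simp add: farey_mem)
  then have u1: "u < 1" using uv by simp
  obtain a b where ab: "quotient_of u = (a, b)" by (cases "quotient_of u")
  obtain x y where xy: "of_int x / of_int y \<in> farey Q" "u < of_int x / of_int y"
    "\<forall>w\<in>farey Q. u < w \<longrightarrow> of_int x / of_int y \<le> w"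
    "quotient_of (of_int x / of_int y) = (x, y)" "x * b - a * y = 1"
    using farey_succ[OF uF u1 ab] by blast
  have le1: "of_int x / of_int y \<le> v" using xy(3) vF uv by blast
  obtain t where t: "t < length L" "L ! t = of_int x / of_int y"
    using xy(1) lf(1) by (metis in_set_conv_nth)
  have "\<not> t \<le> m"
  proof
    assume "t \<le> m"
    then have "L ! t \<le> L ! m"
      using sorted_wrt_nth_less[OF lf(2), of t m] assms(2)
      by (cases "t = m") auto
    then show False using t xy(2) u_def by simp
  qed
  then have "Suc m \<le> t" by simp
  then have "v \<le> L ! t"
    using sorted_wrt_nth_less[OF lf(2), of "Suc m" t] t(1) v_def
    by (cases "t = Suc m") auto
  then have "v = of_int x / of_int y" using le1 t by simp
  then have "quotient_of v = (x, y)" using xy(4) by simp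
  then show ?thesis using ab xy(5) u_def v_def by (simp add: mult.commute)
qed

lemma inv_Q_mem: assumes "Q \<ge> 1" shows "1 / of_nat Q \<in> farey Q"
  and "quotient_of (1 / of_nat Q) = (1, int Q)"
proof -
  have q: "quotient_of (of_int 1 / of_int (int Q)) = (1, int Q)" using assms by (intro qo_mk) auto
  then show "quotient_of (1 / of_nat Q) = (1, int Q)" by simp
  show "1 / of_nat Q \<in> farey Q" using q assms by (simp add: farey_mem)
qed

lemma farey_ge: assumes "w \<in> farey Q" shows "1 / of_nat Q \<le> w"
proof -
  obtain r s where rs: "quotient_of w = (r, s)" by (cases "quotient_of w")
  have s0: "s > 0" using quotient_of_denom_pos[OF rs] .
  have wr: "w = of_int r / of_int s" using quotient_of_div[OF rs] .
  have sQ: "s \<le> int Q" and w0: "0 < w" using assms rs by (auto simp: farey_mem)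
  have r0: "r \<ge> 1" using w0 wr s0 by (simp add: zero_less_divide_iff)
  have "s * 1 \<le> int Q * r" using sQ r0 s0 by (intro mult_mono) auto
  then have "rat_of_int s \<le> rat_of_nat Q * rat_of_int r" by (metis mult_1_right of_int_le_iff of_int_mult of_int_of_nat_eq)
  moreover have "rat_of_int s > 0" using s0 by simp
  moreover have "Q > 0" using sQ s0 by simp
  ultimately show ?thesis unfolding wr by (simp add: field_simps)
qed

lemma list_ends:
  fixes Q :: nat
  defines "L \<equiv> sorted_list_of_set (farey Q)"
  assumes "Q \<ge> 1"
  shows "length L > 0" "L ! 0 = 1 / of_nat Q" "L ! (length L - 1) = 1"
proof -
  note lf = list_facts[of Q, folded L_def]
  have m: "1 / of_nat Q \<in> set L" using inv_Q_mem[OF assms(2)] lf by simp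
  then show n: "length L > 0" by (cases L) auto
  have "L ! 0 \<in> farey Q" using n lf(1) nth_mem by blast
  then have "1 / of_nat Q \<le> L ! 0" by (rule farey_ge)
  moreover obtain t where t: "t < length L" "L ! t = 1 / of_nat Q" using m by (metis in_set_conv_nth)
  moreover have "L ! 0 \<le> L ! t" using sorted_wrt_nth_less[OF lf(2), of 0 t] t by (cases t) auto
  ultimately show "L ! 0 = 1 / of_nat Q" by simp
  have one: "1 \<in> set L" using lf assms(2) by (simp add: farey_mem)
  have "L ! (length L - 1) \<in> farey Q" using n lf(1) nth_mem by (metis diff_less zero_less_one)
  then have "L ! (length L - 1) \<le> 1" by (simp add: farey_mem)
  moreover obtain t where t: "t < length L" "L ! t = 1" using one by (metis in_set_conv_nth)
  moreover have "L ! t \<le> L ! (length L - 1)"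
    using sorted_wrt_nth_less[OF lf(2), of t "length L - 1"] t n by (cases "t = length L - 1") force+
  ultimately show "L ! (length L - 1) = 1" by simp
qed


lemma int_neighbor:
  assumes Q: "Q \<ge> 1"
  shows "farey_p Q (j + 1) * farey_q Q j - farey_p Q j * farey_q Q (j + 1) = 1"
proof -
  define L where "L = sorted_list_of_set (farey Q)"
  define N where "N = length L"
  have NN: "farey_N Q = N" unfolding N_def L_def using list_facts by simp
  have N0: "N > 0" using list_ends(1)[OF Q] unfolding N_def L_def .
  have g: "farey_gamma Q i = L ! nat ((i - 1) mod int N) + of_int ((i - 1) div int N)" for i
    unfolding farey_gamma_def NN L_def ..
  define m where "m = (j - 1) mod int N"
  define c where "c = (j - 1) div int N"
  have m0: "0 \<le> m" "m < int N" unfolding m_def using N0 by auto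
  have jeq: "j = m + 1 + c * int N" unfolding m_def c_def by (metis div_mult_mod_eq add.commute diff_add_cancel add.left_commute)
  have pq: "farey_p Q i = fst (quotient_of (L ! nat ((i - 1) mod int N))) + ((i - 1) div int N) * snd (quotient_of (L ! nat ((i - 1) mod int N)))"
    "farey_q Q i = snd (quotient_of (L ! nat ((i - 1) mod int N)))" for i
    unfolding farey_p_def farey_q_def g qo_add_int by simp_all
  show ?thesis
  proof (cases "m + 1 < int N")
    case True
    have jj: "j + 1 - 1 = (m + 1) + c * int N" using jeq by simp
    have "(j + 1 - 1) mod int N = m + 1" "(j + 1 - 1) div int N = c"
      unfolding jj using True m0 N0 by (simp_all only: mod_mult_self1 div_mult_self1, simp_all)
    moreover have "(j - 1) mod int N = m" "(j - 1) div int N = c" using m_def c_def by simp_all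
    moreover have "nat (m + 1) = Suc (nat m)" using m0 by simp
    moreover have "Suc (nat m) < length L" using True N_def m0 by linarith
    ultimately show ?thesis
      using list_neighbor[of "nat m" Q, folded L_def] unfolding pq
      by (simp add: algebra_simps)
  next
    case False
    then have mN: "m = int N - 1" using m0 by simp
    have "(j + 1 - 1) mod int N = 0" "(j + 1 - 1) div int N = c + 1"
      using N0 unfolding jeq mN by (simp_all add: algebra_simps)
    moreover have "(j - 1) div int N = c" using c_def by simp
    moreover have "L ! nat ((j - 1) mod int N) = 1"
    proof -
      have "nat ((j - 1) mod int N) = length L - 1" using m_def mN N_def by simp
      then show ?thesis using list_ends(3)[OF Q] unfolding L_def by simp
    qed
    moreover have "L ! 0 = 1 / of_nat Q"
      using list_ends[OF Q] unfolding L_def by simp_all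
    moreover have "quotient_of (1 / of_nat Q) = (1, int Q)" using inv_Q_mem[OF Q] by simp
    ultimately show ?thesis unfolding pq by (simp add: algebra_simps)
  qed
qed

theorem lemma1:
  fixes Q k :: nat and i :: int
  assumes "Q \<ge> 2" and "k \<ge> 3"
  shows "farey_nu Q (k - 1) i * farey_nu Q (k - 1) (i + 1)
           - farey_nu Q k i * farey_nu Q (k - 2) (i + 1) = 1"
proof -
  have Q: "Q \<ge> 1" using assms by simp
  define P where "P = farey_p Q"
  define D where "D = farey_q Q"
  define n where "n = int k"
  have k1: "int (k - 1) = n - 1" and k2: "int (k - 2) = n - 2" using assms n_def by auto
  have h1: "P i * D (i - 1) - P (i - 1) * D i = 1"
    using int_neighbor[OF Q, of "i - 1"] P_def D_def by simp
  have h2: "P (i + n - 1) * D (i + n - 2) - P (i + n - 2) * D (i + n - 1) = 1"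
    using int_neighbor[OF Q, of "i + n - 2"] P_def D_def by (simp add: algebra_simps)
  have e: "farey_nu Q (k - 1) i * farey_nu Q (k - 1) (i + 1)
           - farey_nu Q k i * farey_nu Q (k - 2) (i + 1) =
     (P (i + n - 2) * D (i - 1) - P (i - 1) * D (i + n - 2)) * (P (i + n - 1) * D i - P i * D (i + n - 1))
   - (P (i + n - 1) * D (i - 1) - P (i - 1) * D (i + n - 1)) * (P (i + n - 2) * D i - P i * D (i + n - 2))"
    unfolding farey_nu_def k1 k2 P_def D_def n_def[symmetric] by (simp add: algebra_simps)
  also have "\<dots> = (P i * D (i - 1) - P (i - 1) * D i) * (P (i + n - 1) * D (i + n - 2) - P (i + n - 2) * D (i + n - 1))"
    by (simp add: algebra_simps)
  also have "\<dots> = 1" using h1 h2 by simp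
  finally show ?thesis .
qed

end
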